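(* Let $X\sim P_X$ be a discrete random variable on $\mathcal{X}$, let $M$ be a positive integer and $\gamma\ge1$. Then there exists an $M$-type distribution $P_{\hat X}$ (on $\mathcal{X}$, possibly augmented by one extra symbol $\mathtt{e}\notin\mathcal{X}$ to which $P_X$ assigns probability zero) such that $$E_\gamma(P_{\hat X}\|P_X)\le\Big[1-\frac\gamma2\,\mathbb{P}\big[\imath_X(X)\le\log(\gamma M)\big]\Big]^+.$$
   Context: A distribution $P$ on a discrete set is an $M$-type if every probability $P(x)$ is an integer multiple of $1/M$. $\imath_X(x):=\log\frac1{P_X(x)}$. $E_\gamma(P\|Q):=\sup_{\mathcal{A}}\{P(\mathcal{A})-\gamma Q(\mathcal{A})\}$. $[a]^+=\max\{a,0\}$. *)

theory Defs
  imports "HOL-Probability.Probability"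
begin

definition M_type :: "nat \<Rightarrow> 'b pmf \<Rightarrow> bool" where
  "M_type M P \<longleftrightarrow> (\<forall>x. \<exists>k::nat. pmf P x = real k / real M)"

definition info_dens :: "'a pmf \<Rightarrow> 'a \<Rightarrow> real" where
  "info_dens P x = ln (1 / pmf P x)"

definition E_gamma :: "real \<Rightarrow> 'b pmf \<Rightarrow> 'b pmf \<Rightarrow> real" where
  "E_gamma \<gamma> P Q = (SUP A. measure_pmf.prob P A - \<gamma> * measure_pmf.prob Q A)"

end

theory Submission
  imports Defs
begin

lemma sub_mset_size: "m \<le> size N \<Longrightarrow> \<exists>K. K \<subseteq># N \<and> size K = m"
proof (induction N arbitrary: m)
  case empty then show ?case by auto
next
  case (add x N)
  show ?case
  proof (cases "m \<le> size N")
    case True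
    then obtain K where "K \<subseteq># N" "size K = m" using add.IH by blast
    then show ?thesis by (metis add_mset_add_single mset_subset_eq_add_left subset_mset.order_trans)
  next
    case False
    then have "m = size (add_mset x N)" using add.prems by simp
    then show ?thesis by blast
  qed
qed

lemma finite_heavy:
  fixes p :: "'a pmf" assumes c: "c > 0"
  shows "finite {x. pmf p x \<ge> c}"
proof (rule ccontr)
  assume inf: "infinite {x. pmf p x \<ge> c}"
  obtain n :: nat where n: "real n > 1 / c" using reals_Archimedean2 by blast
  obtain F where F: "F \<subseteq> {x. pmf p x \<ge> c}" "finite F" "card F = n"
    using infinite_arbitrarily_large[OF inf] by blast
  have "real n * c = (\<Sum>x\<in>F. c)" using F by simp
  also have "\<dots> \<le> (\<Sum>x\<in>F. pmf p x)" using F by (intro sum_mono) auto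
  also have "\<dots> = measure p F" using F by (simp add: measure_measure_pmf_finite)
  also have "\<dots> \<le> 1" by simp
  finally have "real n * c \<le> 1" .
  moreover have "real n * c > 1" using n c by (simp add: field_simps)
  ultimately show False by simp
qed

lemma floor_half: "(t::real) \<ge> 1 \<Longrightarrow> real (nat \<lfloor>t\<rfloor>) \<ge> t / 2"
proof -
  assume t: "t \<ge> 1"
  have "real_of_int \<lfloor>t\<rfloor> \<ge> t / 2"
  proof (cases "t \<ge> 2")
    case True then show ?thesis using floor_correct[of t] by linarith
  next
    case False then have "\<lfloor>t\<rfloor> = 1" using t by (simp add: floor_eq_iff)
    then show ?thesis using False by simp
  qed
  moreover have "\<lfloor>t\<rfloor> \<ge> 0" using t by simp
  ultimately show ?thesis by simp
qed

theorem mainTheorem5: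
  fixes PX :: "'a pmf" and M :: nat and \<gamma> :: real
  assumes "M \<ge> 1" and "\<gamma> \<ge> 1"
  shows "\<exists>Q :: 'a option pmf. M_type M Q \<and>
    E_gamma \<gamma> Q (map_pmf Some PX)
      \<le> max 0 (1 - \<gamma> / 2 * measure_pmf.prob PX {x. info_dens PX x \<le> ln (\<gamma> * real M)})"
proof -
  define c where "c = 1 / (\<gamma> * real M)"
  have Mpos: "real M > 0" using assms by simp
  have gM: "\<gamma> * real M \<ge> 1" using assms mult_mono[of 1 \<gamma> 1 "real M"] by simp
  have cpos: "c > 0" unfolding c_def using assms by simp
  define S where "S = {x. pmf PX x \<ge> c}"
  have finS: "finite S" unfolding S_def by (rule finite_heavy[OF cpos])
  define n where "n x = nat \<lfloor>\<gamma> * real M * pmf PX x\<rfloor>" for x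
  define N0 where "N0 = (\<Sum>x\<in>S. replicate_mset (n x) x)"
  define m where "m = min M (sum n S)"
  have sizeN0: "size N0 = sum n S" unfolding N0_def by simp
  obtain K0 where K0: "K0 \<subseteq># N0" "size K0 = m"
    using sub_mset_size[of m N0] sizeN0 m_def by auto
  define K where "K = image_mset Some K0 + replicate_mset (M - m) None"
  have sizeK: "size K = M" unfolding K_def using K0 m_def by simp
  have Kne: "K \<noteq> {#}" using sizeK assms by auto
  define Q where "Q = pmf_of_multiset K"
  have pmfQ: "pmf Q y = real (count K y) / real M" for y
    unfolding Q_def using Kne sizeK by simp
  have cntN0: "count N0 x = (if x \<in> S then n x else 0)" for x
    unfolding N0_def count_sum using finS
    by (simp add: count_replicate_mset if_distrib sum.delta cong: if_cong)
  have cntSome: "count K (Some x) = count K0 x" for x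
    proof -
    have "Some -` {Some x} = {x}" by auto
    then show ?thesis unfolding K_def by (simp add: count_image_mset Int_insert_left not_in_iff)
  qed
  have cntNone: "count K None = M - m"
    unfolding K_def by (auto simp add: count_image_mset)
  have cntK0: "count K0 x \<le> (if x \<in> S then n x else 0)" for x
    using K0(1) cntN0 by (metis mset_subset_eq_count)
  have MT: "M_type M Q" unfolding M_type_def pmfQ by blast
  have supp: "set_pmf Q \<subseteq> insert None (Some ` S)"
  proof
    fix y assume y: "y \<in> set_pmf Q"
    show "y \<in> insert None (Some ` S)"
    proof (cases y)
      case (Some x)
      have "pmf Q y > 0" using y by (simp add: pmf_positive)
      then have "count K0 x > 0" using Some pmfQ cntSome by (metis div_0 gr0I less_irrefl of_nat_0)
      then have "x \<in> S"
      proof (rule contrapos_pp)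
        assume "x \<notin> S" then have "count K0 x \<le> 0" using cntK0[of x] by (simp only: if_False)
        then show "\<not> count K0 x > 0" by linarith
      qed
      then show ?thesis using Some by auto
    qed simp
  qed
  have domin: "pmf Q (Some x) \<le> \<gamma> * pmf PX x" for x
  proof -
    have "real (count K0 x) \<le> \<gamma> * real M * pmf PX x"
    proof (cases "x \<in> S")
      case True
      have "real (count K0 x) \<le> real (n x)" using cntK0[of x] True by simp
      also have "\<dots> \<le> \<gamma> * real M * pmf PX x"
      proof -
        have t0: "\<gamma> * real M * pmf PX x \<ge> 0" using assms by simp
        then show ?thesis unfolding n_def by simp
      qed
      finally show ?thesis .
    next
      case False then show ?thesis using cntK0[of x] assms by simp
    qed
    then show ?thesis unfolding pmfQ cntSome using Mpos by (simp add: field_simps)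
  qed
  define S' where "S' = {x. info_dens PX x \<le> ln (\<gamma> * real M)}"
  have SS': "S' \<inter> set_pmf PX = S"
  proof -
    have "S \<subseteq> set_pmf PX" unfolding S_def using cpos by (auto simp: set_pmf_iff)
    moreover have "x \<in> S' \<longleftrightarrow> x \<in> S" if "x \<in> set_pmf PX" for x
    proof -
      have p: "pmf PX x > 0" using that by (simp add: pmf_positive)
      have "x \<in> S' \<longleftrightarrow> 1 / pmf PX x \<le> \<gamma> * real M"
        unfolding S'_def info_dens_def using p gM by (simp add: ln_le_cancel_iff)
      also have "\<dots> \<longleftrightarrow> c \<le> pmf PX x" unfolding c_def using p gM
        by (simp add: field_simps)
      finally show ?thesis unfolding S_def by simp
    qed
    ultimately show ?thesis by blast
  qed
  have probS: "measure_pmf.prob PX S' = (\<Sum>x\<in>S. pmf PX x)"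
    by (metis SS' finS measure_Int_set_pmf measure_measure_pmf_finite)
  have sumn: "real (sum n S) / real M \<ge> \<gamma> / 2 * (\<Sum>x\<in>S. pmf PX x)"
  proof -
    have "(\<Sum>x\<in>S. \<gamma> * real M * pmf PX x / 2) \<le> (\<Sum>x\<in>S. real (n x))"
    proof (rule sum_mono)
      fix x assume "x \<in> S"
      then have "\<gamma> * real M * pmf PX x \<ge> 1" unfolding S_def c_def using gM
        by (simp add: field_simps)
      then show "\<gamma> * real M * pmf PX x / 2 \<le> real (n x)" unfolding n_def by (rule floor_half)
    qed
    then have "real M * (\<gamma> / 2 * (\<Sum>x\<in>S. pmf PX x)) \<le> real (sum n S)"
      by (simp add: sum_distrib_left sum_divide_distrib[symmetric] algebra_simps)
    then show ?thesis using Mpos by (simp add: field_simps)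
  qed
  have None_bd: "pmf Q None \<le> max 0 (1 - \<gamma> / 2 * measure_pmf.prob PX S')"
  proof (cases "m = M")
    case True then show ?thesis using pmfQ cntNone by simp
  next
    case False
    then have m: "m = sum n S" "sum n S \<le> M" unfolding m_def by auto
    have "pmf Q None = (real M - real (sum n S)) / real M"
      using pmfQ cntNone m by (simp add: of_nat_diff)
    also have "\<dots> = 1 - real (sum n S) / real M" using Mpos by (simp add: field_simps)
    finally show ?thesis using sumn probS by simp
  qed
  have "E_gamma \<gamma> Q (map_pmf Some PX) \<le> pmf Q None"
    unfolding E_gamma_def
  proof (rule cSUP_least)
    fix A :: "'a option set"
    define B where "B = Some -` A"
    have fin2: "finite (insert None (Some ` (B \<inter> S)))" using finS by simp
    have "measure_pmf.prob Q A = measure_pmf.prob Q (A \<inter> set_pmf Q)"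
      by (simp add: measure_Int_set_pmf)
    also have "\<dots> \<le> measure_pmf.prob Q (insert None (Some ` (B \<inter> S)))"
      apply (rule measure_pmf.finite_measure_mono)
      using supp unfolding B_def by auto
    also have "\<dots> = pmf Q None + (\<Sum>x\<in>B \<inter> S. pmf Q (Some x))"
      using fin2 finS by (simp add: measure_measure_pmf_finite sum.reindex)
    also have "\<dots> \<le> pmf Q None + (\<Sum>x\<in>B \<inter> S. \<gamma> * pmf PX x)"
      using domin by (intro add_left_mono sum_mono) auto
    also have "\<dots> = pmf Q None + \<gamma> * measure_pmf.prob PX (B \<inter> S)"
      using finS by (simp add: measure_measure_pmf_finite sum_distrib_left)
    also have "\<dots> \<le> pmf Q None + \<gamma> * measure_pmf.prob PX B"
      using assms by (intro add_left_mono mult_left_mono measure_pmf.finite_measure_mono) auto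
    finally show "measure_pmf.prob Q A - \<gamma> * measure_pmf.prob (map_pmf Some PX) A \<le> pmf Q None"
      unfolding B_def by simp
  qed simp
  then show ?thesis using MT None_bd unfolding S'_def by (intro exI[of _ Q]) auto
qed
end
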